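(* Let $J$ be a Jacobi matrix and $g_n,c_n$ as in the context. (i) If $\sum_{n=1}^\infty[|b_n|+|a_n^2-1|]<\infty$, then $u(z;J)=\lim_{n\to\infty}g_n(z)$ converges for all $z\in\overline{\mathbb{D}}\setminus\{\pm1\}$, uniformly on compact subsets of $\overline{\mathbb{D}}\setminus\{\pm1\}$; $u$ is analytic on $\mathbb{D}$ and continuous on $\overline{\mathbb{D}}\setminus\{\pm1\}$; and for $z\in\mathbb{D}$, $\lim_{n\to\infty}c_n(z)=\frac{u(z;J)}{1-z^2}$. (ii) If $\sum_{n=1}^\infty n[|b_n|+|a_n^2-1|]<\infty$, then $\lim_n g_n(z)$ converges for all $z\in\overline{\mathbb{D}}$, uniformly there, and $u$ is continuous on $\overline{\mathbb{D}}$. (iii) If $|b_n|+|a_n^2-1|\le CR^{-2n}$ for some $C$ and $R>1$, then $\lim_n g_n(z)$ converges for $z\in\{|z|<R\}$, uniformly on compact subsets.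
   Context: $J$ is a Jacobi matrix with diagonal entries $b_n\in\mathbb{R}$ and off-diagonal entries $a_n>0$ ($n\ge1$); set $a_0=1$. The orthonormal polynomials satisfy $p_{-1}=0$, $p_0=1$, $xp_n(x)=a_{n+1}p_{n+1}(x)+b_{n+1}p_n(x)+a_np_{n-1}(x)$. Define $c_n(z)=z^np_n(z+z^{-1})$ and $g_n(z)=z^n\bigl(p_n(z+z^{-1})-a_nzp_{n-1}(z+z^{-1})\bigr)$. $\mathbb{D}=\{|z|<1\}$. *)

theory Defs
  imports "HOL-Analysis.Analysis"
begin

text \<open>Orthonormal polynomials p_n of the Jacobi matrix with diagonal b_n and
  off-diagonal a_n (n >= 1), evaluated at a complex point x.
  Recurrence: x p_n = a_(n+1) p_(n+1) + b_(n+1) p_n + a_n p_(n-1), p_(-1)=0, p_0=1.\<close>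
fun opoly :: "(nat \<Rightarrow> real) \<Rightarrow> (nat \<Rightarrow> real) \<Rightarrow> nat \<Rightarrow> complex \<Rightarrow> complex" where
  "opoly a b 0 x = 1"
| "opoly a b (Suc 0) x = (x - of_real (b 1)) / of_real (a 1)"
| "opoly a b (Suc (Suc n)) x =
     ((x - of_real (b (n+2))) * opoly a b (Suc n) x - of_real (a (n+1)) * opoly a b n x)
       / of_real (a (n+2))"

text \<open>c_n(z) = z^n p_n(z + 1/z), as the polynomial in z it is (so that it is also
  correctly defined at z = 0).  Obtained by multiplying the recurrence by z^(n+2).\<close>
fun cpoly :: "(nat \<Rightarrow> real) \<Rightarrow> (nat \<Rightarrow> real) \<Rightarrow> nat \<Rightarrow> complex \<Rightarrow> complex" where
  "cpoly a b 0 z = 1"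
| "cpoly a b (Suc 0) z = (z^2 + 1 - of_real (b 1) * z) / of_real (a 1)"
| "cpoly a b (Suc (Suc n)) z =
     ((z^2 + 1 - of_real (b (n+2)) * z) * cpoly a b (Suc n) z
        - of_real (a (n+1)) * z^2 * cpoly a b n z) / of_real (a (n+2))"

text \<open>g_n(z) = z^n (p_n(z+1/z) - a_n z p_(n-1)(z+1/z)) = c_n(z) - a_n z^2 c_(n-1)(z), g_0 = 1.\<close>
definition gpoly :: "(nat \<Rightarrow> real) \<Rightarrow> (nat \<Rightarrow> real) \<Rightarrow> nat \<Rightarrow> complex \<Rightarrow> complex" where
  "gpoly a b n z = (if n = 0 then 1
      else cpoly a b n z - of_real (a n) * z^2 * cpoly a b (n - 1) z)"

lemma cpoly_eq:
  "z \<noteq> 0 \<Longrightarrow> cpoly a b n z = z^n * opoly a b n (z + inverse z)"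
proof (induction a b n z rule: cpoly.induct)
  case (1 a b z) then show ?case by simp
next
  case (2 a b z) then show ?case by (cases "a 1 = 0") (simp_all add: field_simps power2_eq_square)
next
  case (3 a b n z)
  then show ?case
    by (cases "a (n+2) = 0") (simp_all only: cpoly.simps opoly.simps, simp_all add: field_simps power2_eq_square)
qed

end

theory Submission
  imports Defs "HOL-Complex_Analysis.Complex_Analysis"
begin


lemma rec_c:
  assumes "a (Suc n) \<noteq> 0"
  shows "cpoly a b (Suc n) z = (gpoly a b n z + (z^2 - of_real (b (Suc n)) * z) * cpoly a b n z) / of_real (a (Suc n))"
proof (cases n)
  case 0 then show ?thesis using assms by (simp add: gpoly_def field_simps)
next
  case (Suc m) then show ?thesis using assms
    by (simp add: gpoly_def field_simps power2_eq_square)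
qed

lemma rec_g: "gpoly a b (Suc n) z = cpoly a b (Suc n) z - of_real (a (Suc n)) * z^2 * cpoly a b n z"
  by (simp add: gpoly_def)

lemma cpoly_holo2: "cpoly a b n holomorphic_on UNIV \<and> cpoly a b (Suc n) holomorphic_on UNIV"
proof (induction n)
  case 0 then show ?case by (auto intro!: holomorphic_intros)
next
  case (Suc n)
  have "(\<lambda>z. ((z^2 + 1 - of_real (b (n+2)) * z) * cpoly a b (Suc n) z
        - of_real (a (n+1)) * z^2 * cpoly a b n z) / of_real (a (n+2))) holomorphic_on UNIV"
    using Suc by (auto intro!: holomorphic_intros)
  then show ?case using Suc by (simp add: numeral_2_eq_2)
qed

lemma cpoly_holo: "cpoly a b n holomorphic_on UNIV"
  using cpoly_holo2 by blast

lemma gpoly_holo: "gpoly a b n holomorphic_on UNIV"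
  unfolding gpoly_def[abs_def] by (cases "n=0") (auto intro!: holomorphic_intros cpoly_holo)

lemma gpoly_cont: "continuous_on S (gpoly a b n)"
  using gpoly_holo holomorphic_on_imp_continuous_on continuous_on_subset by blast

lemma inv_minus_one_bound:
  fixes a :: real assumes "a > 0" "1/a \<le> M"
  shows "\<bar>1/a - 1\<bar> \<le> M * \<bar>a^2 - 1\<bar>" "\<bar>1 - a\<bar> \<le> \<bar>a^2 - 1\<bar>"
proof -
  have "a^2 - 1 = (a - 1) * (1 + a)" by (simp add: power2_eq_square algebra_simps)
  then have e: "\<bar>a^2 - 1\<bar> = \<bar>1 - a\<bar> * (1 + a)" using assms
    by (simp add: abs_mult abs_minus_commute)
  show "\<bar>1 - a\<bar> \<le> \<bar>a^2 - 1\<bar>" unfolding e using assms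
    by (simp add: mult_le_cancel_left1 algebra_simps)
  have "\<bar>1/a - 1\<bar> = \<bar>1 - a\<bar> * (1/a)" using assms by (simp add: field_simps abs_div)
  also have "\<dots> \<le> \<bar>a^2 - 1\<bar> * M"
    by (rule mult_mono) (use assms \<open>\<bar>1 - a\<bar> \<le> \<bar>a^2 - 1\<bar>\<close> in auto)
  finally show "\<bar>1/a - 1\<bar> \<le> M * \<bar>a^2 - 1\<bar>" by (simp add: mult.commute)
qed

lemma est_gen:
  fixes a bb \<rho> M :: real and z g c :: complex
  assumes a: "a > 0" "1/a \<le> M" and z: "cmod z \<le> \<rho>" and t: "\<bar>t\<bar> \<le> \<bar>a^2 - 1\<bar>"
  shows "cmod (g * of_real (1/a - 1) + c * ((z^2 * of_real t - of_real bb * z) / of_real a))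
     \<le> M*(1+\<rho>+\<rho>^2)*(\<bar>bb\<bar>+\<bar>a^2-1\<bar>)*(cmod g + cmod c)"
proof -
  define E where "E = \<bar>bb\<bar>+\<bar>a^2-1\<bar>"
  have r0: "\<rho> \<ge> 0" using z norm_ge_zero order_trans by blast
  have M0: "M \<ge> 0" using a by (meson less_le_trans less_eq_real_def zero_less_divide_1_iff)
  have E0: "E \<ge> 0" unfolding E_def by simp
  have k0: "M*(1+\<rho>+\<rho>^2)*E \<ge> 0" using M0 r0 E0 by simp
  have 1: "cmod (of_real (1/a - 1)) \<le> M*(1+\<rho>+\<rho>^2)*E"
  proof -
    have "cmod (of_real (1/a - 1)) \<le> M * \<bar>a^2 - 1\<bar>" using inv_minus_one_bound[OF a] by (simp only: norm_of_real)
    also have "\<dots> \<le> M * ((1+\<rho>+\<rho>^2)*E)"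
      apply (rule mult_left_mono[OF _ M0]) unfolding E_def using r0
      by (smt (verit, best) mult_le_cancel_right1 zero_le_power2 abs_ge_zero mult_nonneg_nonneg)
    finally show ?thesis by (simp add: mult.assoc)
  qed
  have 2: "cmod ((z^2 * of_real t - of_real bb * z) / of_real a) \<le> M*(1+\<rho>+\<rho>^2)*E"
  proof -
    have "cmod (z^2 * of_real t - of_real bb * z) \<le> cmod z ^2 * \<bar>t\<bar> + \<bar>bb\<bar> * cmod z"
      by (rule order_trans[OF norm_triangle_ineq4]) (simp add: norm_mult norm_power)
    also have "\<dots> \<le> \<rho>^2 * \<bar>a^2 - 1\<bar> + \<bar>bb\<bar> * \<rho>"
      using z t r0 by (intro add_mono mult_mono power_mono) auto
    also have "\<dots> \<le> (1+\<rho>+\<rho>^2)*E" unfolding E_def using r0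
      by (smt (verit, best) abs_ge_zero distrib_left mult.commute mult_nonneg_nonneg zero_le_power2)
    finally have n: "cmod (z^2 * of_real t - of_real bb * z) \<le> (1+\<rho>+\<rho>^2)*E" .
    have "cmod ((z^2 * of_real t - of_real bb * z) / of_real a) = cmod (z^2 * of_real t - of_real bb * z) * (1/a)"
      using a by (simp add: norm_divide)
    also have "\<dots> \<le> (1+\<rho>+\<rho>^2)*E * M" using n a r0 E0 by (intro mult_mono) auto
    finally show ?thesis by (simp add: algebra_simps)
  qed
  have "cmod (g * of_real (1/a - 1) + c * ((z^2 * of_real t - of_real bb * z) / of_real a))
     \<le> cmod g * cmod (of_real (1/a - 1)) + cmod c * cmod ((z^2 * of_real t - of_real bb * z) / of_real a)"
    unfolding norm_mult[symmetric] by (rule norm_triangle_ineq)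
  also have "\<dots> \<le> cmod g * (M*(1+\<rho>+\<rho>^2)*E) + cmod c * (M*(1+\<rho>+\<rho>^2)*E)"
    by (intro add_mono mult_left_mono 1 2) auto
  finally show ?thesis unfolding E_def by (simp add: algebra_simps)
qed

lemma est_g:
  fixes a bb \<rho> M :: real and z g c :: complex
  assumes a: "a > 0" "1/a \<le> M" and z: "cmod z \<le> \<rho>"
  shows "cmod ((g + (z^2 - of_real bb * z) * c) / of_real a - of_real a * z^2 * c - g)
     \<le> M*(1+\<rho>+\<rho>^2)*(\<bar>bb\<bar>+\<bar>a^2-1\<bar>)*(cmod g + cmod c)"
proof -
  have "(g + (z^2 - of_real bb * z) * c) / of_real a - of_real a * z^2 * c - g
     = g * of_real (1/a - 1) + c * ((z^2 * of_real (1 - a^2) - of_real bb * z) / of_real a)"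
    using a by (simp add: field_simps power2_eq_square)
  moreover have "\<bar>1 - a^2\<bar> \<le> \<bar>a^2 - 1\<bar>" by simp
  ultimately show ?thesis using est_gen[OF a z] by metis
qed

lemma est_h:
  fixes a bb \<rho> M :: real and z g c :: complex
  assumes a: "a > 0" "1/a \<le> M" and z: "cmod z \<le> \<rho>"
  shows "cmod ((g + (z^2 - of_real bb * z) * c) / of_real a - z^2 * c - g)
     \<le> M*(1+\<rho>+\<rho>^2)*(\<bar>bb\<bar>+\<bar>a^2-1\<bar>)*(cmod g + cmod c)"
proof -
  have "(g + (z^2 - of_real bb * z) * c) / of_real a - z^2 * c - g
     = g * of_real (1/a - 1) + c * ((z^2 * of_real (1 - a) - of_real bb * z) / of_real a)"
    using a by (simp add: field_simps power2_eq_square)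
  moreover have "\<bar>1 - a\<bar> \<le> \<bar>a^2 - 1\<bar>" using inv_minus_one_bound[OF a] by simp
  ultimately show ?thesis using est_gen[OF a z] by metis
qed

lemma geom_shift: "(\<Sum>i\<le>Suc m. (w::complex)^i) = 1 + w * (\<Sum>i\<le>m. w^i)"
  by (simp add: sum.atMost_Suc_shift sum_distrib_left del: sum.atMost_Suc)

lemma abel_rep:
  fixes c :: "nat \<Rightarrow> complex" and w :: complex
  assumes c0: "c 0 = 1"
  defines "x \<equiv> \<lambda>j. if j = 0 then 1 else c j - w * c (j - 1)"
  shows "c n = (\<Sum>i\<le>n. w^i) + (\<Sum>j<n. (x (Suc j) - x j) * (\<Sum>i\<le>n - Suc j. w^i))"
proof (induction n)
  case 0 then show ?case using c0 by simp
next
  case (Suc n)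
  define S where "S = (\<lambda>m. \<Sum>i\<le>m. w^i)"
  define d where "d = (\<lambda>j. x (Suc j) - x j)"
  have IH: "c n = S n + (\<Sum>j<n. d j * S (n - Suc j))" using Suc unfolding S_def d_def by simp
  have x0: "x 0 = 1" unfolding x_def by simp
  have cs: "c (Suc n) = w * c n + x (Suc n)" unfolding x_def by simp
  have Sshift: "w * S m = S (Suc m) - 1" for m unfolding S_def using geom_shift[of w m] by simp
  have "S 0 = 1" by (simp add: S_def)
  have tel: "(\<Sum>j<n. d j) = x n - 1" unfolding d_def using sum_lessThan_telescope[of x n] x0 by simp
  have "w * (\<Sum>j<n. d j * S (n - Suc j)) = (\<Sum>j<n. d j * (w * S (n - Suc j)))"
    by (simp add: sum_distrib_left algebra_simps)
  also have "\<dots> = (\<Sum>j<n. d j * (S (Suc n - Suc j) - 1))"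
    by (intro sum.cong refl) (simp add: Sshift Suc_diff_Suc)
  also have "\<dots> = (\<Sum>j<n. d j * S (Suc n - Suc j)) - (x n - 1)"
    by (simp add: algebra_simps sum_subtractf tel[symmetric])
  finally have A: "w * (\<Sum>j<n. d j * S (n - Suc j)) = (\<Sum>j<n. d j * S (Suc n - Suc j)) - (x n - 1)" .
  have "c (Suc n) = w * S n + w * (\<Sum>j<n. d j * S (n - Suc j)) + x (Suc n)"
    using cs IH by (simp add: algebra_simps)
  also have "\<dots> = S (Suc n) + ((\<Sum>j<n. d j * S (Suc n - Suc j)) + d n * S 0)"
    unfolding A Sshift \<open>S 0 = 1\<close> by (simp add: d_def algebra_simps)
  also have "\<dots> = S (Suc n) + (\<Sum>j<Suc n. d j * S (Suc n - Suc j))"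
    by simp
  finally show ?case unfolding S_def d_def .
qed

lemma abel_bound:
  fixes c :: "nat \<Rightarrow> complex" and w :: complex
  assumes c0: "c 0 = 1"
  and L: "\<And>m. m \<le> n \<Longrightarrow> cmod (\<Sum>i\<le>m. w^i) \<le> L"
  defines "x \<equiv> \<lambda>j. if j = 0 then 1 else c j - w * c (j - 1)"
  shows "cmod (c n) \<le> L * (1 + (\<Sum>j<n. cmod (x (Suc j) - x j)))"
proof -
  have "cmod (c n) \<le> cmod (\<Sum>i\<le>n. w^i) + (\<Sum>j<n. cmod ((x (Suc j) - x j) * (\<Sum>i\<le>n - Suc j. w^i)))"
  proof -
    have rep: "c n = (\<Sum>i\<le>n. w^i) + (\<Sum>j<n. (x (Suc j) - x j) * (\<Sum>i\<le>n - Suc j. w^i))"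
      unfolding x_def by (rule abel_rep[where c=c, OF c0])
    show ?thesis
    apply (subst rep) by (rule order_trans[OF norm_triangle_ineq add_left_mono[OF norm_sum]])
  qed
  also have "\<dots> \<le> L + (\<Sum>j<n. cmod (x (Suc j) - x j) * L)"
    unfolding norm_mult by (intro add_mono sum_mono mult_left_mono L) auto
  finally show ?thesis by (simp add: sum_distrib_left algebra_simps)
qed

lemma shift_sum_le:
  fixes e :: "nat \<Rightarrow> real" assumes "\<And>j. e j \<ge> 0"
  shows "(\<Sum>j<n. (if j = 0 then 0 else e (j - 1))) \<le> (\<Sum>j<n. e j)"
proof (cases n)
  case 0 then show ?thesis by simp
next
  case (Suc m)
  have "(\<Sum>j<n. (if j = 0 then 0 else e (j - 1))) = (\<Sum>j<m. e j)"
    unfolding Suc sum.lessThan_Suc_shift by simp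
  also have "\<dots> \<le> (\<Sum>j<n. e j)" unfolding Suc using assms by simp
  finally show ?thesis .
qed

lemma bounds_at:
  fixes a b :: "nat \<Rightarrow> real" and L :: "nat \<Rightarrow> real" and z :: complex
  assumes a_pos: "\<And>n. n \<ge> 1 \<Longrightarrow> a n > 0"
  and M: "\<And>n. 1 / a (Suc n) \<le> M"
  and rho: "cmod z \<le> \<rho>"
  and L: "\<And>n m. m \<le> n \<Longrightarrow> cmod (\<Sum>i\<le>m. (z^2)^i) \<le> L n"
  and L0: "\<And>n. L n \<ge> 0"
  and summ: "summable (\<lambda>n. (\<bar>b (Suc n)\<bar> + \<bar>a (Suc n)^2 - 1\<bar>) * (1 + L n))"
  defines "Kc \<equiv> 2 * M * (1 + \<rho> + \<rho>^2)"
  defines "B \<equiv> exp (2 * Kc * (\<Sum>n. (\<bar>b (Suc n)\<bar> + \<bar>a (Suc n)^2 - 1\<bar>) * (1 + L n)))"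
  shows "\<forall>n. cmod (gpoly a b n z) \<le> B \<and> cmod (cpoly a b n z) \<le> L n * B
     \<and> cmod (gpoly a b (Suc n) z - gpoly a b n z) \<le> Kc * (\<bar>b (Suc n)\<bar> + \<bar>a (Suc n)^2 - 1\<bar>) * (cmod (gpoly a b n z) + cmod (cpoly a b n z))
     \<and> cmod (cpoly a b (Suc n) z - z^2 * cpoly a b n z - gpoly a b n z) \<le> Kc * (\<bar>b (Suc n)\<bar> + \<bar>a (Suc n)^2 - 1\<bar>) * (cmod (gpoly a b n z) + cmod (cpoly a b n z))"
proof -
  define \<epsilon> where "\<epsilon> n = \<bar>b (Suc n)\<bar> + \<bar>a (Suc n)^2 - 1\<bar>" for n
  define g where "g n = gpoly a b n z" for n
  define c where "c n = cpoly a b n z" for n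
  define w where "w = z^2"
  define e where "e n = cmod (g (Suc n) - g n) + cmod (c (Suc n) - w * c n - g n)" for n
  define Q where "Q n = 1 + 2 * (\<Sum>k<n. e k)" for n
  have \<epsilon>0: "\<epsilon> n \<ge> 0" for n unfolding \<epsilon>_def by simp
  have r0: "\<rho> \<ge> 0" using rho norm_ge_zero order_trans by blast
  have apos: "a (Suc n) > 0" for n using a_pos by simp
  have M0: "M \<ge> 0" using M[of 0] apos[of 0] by (meson less_le_trans less_eq_real_def zero_less_divide_1_iff)
  have Kc0: "Kc \<ge> 0" unfolding Kc_def using M0 r0 by simp
  have e0: "e n \<ge> 0" for n unfolding e_def by simp
  have g0: "g 0 = 1" unfolding g_def gpoly_def by simp
  have c0: "c 0 = 1" unfolding c_def by simp
  have estg: "cmod (g (Suc n) - g n) \<le> Kc/2 * \<epsilon> n * (cmod (g n) + cmod (c n))" for n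
  proof -
    have "g (Suc n) - g n = (g n + (z^2 - of_real (b (Suc n)) * z) * c n) / of_real (a (Suc n)) - of_real (a (Suc n)) * z^2 * c n - g n"
      unfolding g_def c_def rec_g rec_c[of a n b z, OF apos[of n, THEN less_imp_neq, symmetric]] by simp
    then show ?thesis using est_g[OF apos M rho] unfolding Kc_def \<epsilon>_def by simp
  qed
  have esth: "cmod (c (Suc n) - w * c n - g n) \<le> Kc/2 * \<epsilon> n * (cmod (g n) + cmod (c n))" for n
  proof -
    have "c (Suc n) - w * c n - g n = (g n + (z^2 - of_real (b (Suc n)) * z) * c n) / of_real (a (Suc n)) - z^2 * c n - g n"
      unfolding g_def c_def w_def rec_c[of a n b z, OF apos[of n, THEN less_imp_neq, symmetric]] by simp
    then show ?thesis using est_h[OF apos M rho] unfolding Kc_def \<epsilon>_def by simp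
  qed
  have este: "e n \<le> Kc * \<epsilon> n * (cmod (g n) + cmod (c n))" for n
    using estg[of n] esth[of n] unfolding e_def by simp
  have gQ: "cmod (g n) \<le> Q n" for n
  proof -
    have "g n = 1 + (\<Sum>k<n. g (Suc k) - g k)" using sum_lessThan_telescope[of g n] g0 by simp
    then have "cmod (g n) \<le> cmod (1::complex) + cmod (\<Sum>k<n. g (Suc k) - g k)"
      by (metis norm_triangle_ineq)
    also have "\<dots> \<le> 1 + (\<Sum>k<n. cmod (g (Suc k) - g k))"
      using norm_sum[of "\<lambda>k. g (Suc k) - g k" "{..<n}"] by simp
    finally have "cmod (g n) \<le> 1 + (\<Sum>k<n. cmod (g (Suc k) - g k))" .
    also have "\<dots> \<le> 1 + (\<Sum>k<n. e k)" unfolding e_def by (intro add_left_mono sum_mono) simp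
    also have "\<dots> \<le> Q n" unfolding Q_def using e0 by (simp add: sum_nonneg)
    finally show ?thesis .
  qed
  define x where "x = (\<lambda>j. if j = 0 then 1 else c j - w * c (j - 1))"
  have dx: "cmod (x (Suc j) - x j) \<le> e j + (if j = 0 then 0 else e (j - 1))" for j
  proof (cases j)
    case 0 then show ?thesis unfolding x_def e_def using g0 by simp
  next
    case (Suc i)
    have "x (Suc j) - x j = (c (Suc j) - w * c j - g j) + (g (Suc i) - g i) - (c (Suc i) - w * c i - g i)"
      unfolding x_def Suc by simp
    then have "cmod (x (Suc j) - x j) \<le> cmod ((c (Suc j) - w * c j - g j) + (g (Suc i) - g i)) + cmod (c (Suc i) - w * c i - g i)"
      by (metis norm_triangle_ineq4)
    also have "\<dots> \<le> cmod (c (Suc j) - w * c j - g j) + cmod (g (Suc i) - g i) + cmod (c (Suc i) - w * c i - g i)"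
      using norm_triangle_ineq by (intro add_right_mono) 
    also have "\<dots> \<le> e j + e i" unfolding e_def Suc
      using norm_ge_zero[of "g (Suc (Suc i)) - g (Suc i)"] by linarith
    finally show ?thesis using Suc by simp
  qed
  have cQ: "cmod (c n) \<le> L n * Q n" for n
  proof -
    have "cmod (c n) \<le> L n * (1 + (\<Sum>j<n. cmod (x (Suc j) - x j)))"
      unfolding x_def w_def by (rule abel_bound[where c=c, OF c0 L]) simp
    also have "\<dots> \<le> L n * Q n"
    proof (rule mult_left_mono[OF _ L0])
      have "(\<Sum>j<n. cmod (x (Suc j) - x j)) \<le> (\<Sum>j<n. e j + (if j = 0 then 0 else e (j - 1)))"
        by (rule sum_mono[OF dx])
      also have "\<dots> \<le> (\<Sum>j<n. e j) + (\<Sum>j<n. e j)"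
        unfolding sum.distrib using shift_sum_le[OF e0] by simp
      finally show "1 + (\<Sum>j<n. cmod (x (Suc j) - x j)) \<le> Q n" unfolding Q_def by simp
    qed
    finally show ?thesis .
  qed
  have Q1: "Q n \<ge> 1" for n unfolding Q_def using e0 by (simp add: sum_nonneg)
  have eQ: "e n \<le> Kc * \<epsilon> n * (1 + L n) * Q n" for n
  proof -
    have "e n \<le> Kc * \<epsilon> n * (cmod (g n) + cmod (c n))" by (rule este)
    also have "\<dots> \<le> Kc * \<epsilon> n * (Q n + L n * Q n)"
      using Kc0 \<epsilon>0 gQ cQ by (intro mult_left_mono add_mono) auto
    finally show ?thesis by (simp add: algebra_simps)
  qed
  have Qexp: "Q n \<le> exp (2 * Kc * (\<Sum>k<n. \<epsilon> k * (1 + L k)))" for n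
  proof (induction n)
    case 0 then show ?case unfolding Q_def by simp
  next
    case (Suc n)
    have "Q (Suc n) = Q n + 2 * e n" unfolding Q_def by simp
    also have "\<dots> \<le> Q n * (1 + 2 * Kc * \<epsilon> n * (1 + L n))" 
    proof -
      have "Q n * (1 + 2 * Kc * \<epsilon> n * (1 + L n)) = Q n + 2 * (Kc * \<epsilon> n * (1 + L n) * Q n)"
        by (simp add: algebra_simps)
      then show ?thesis using eQ[of n] by linarith
    qed
    also have "\<dots> \<le> Q n * exp (2 * Kc * \<epsilon> n * (1 + L n))"
      using Q1[of n] by (intro mult_left_mono) (auto simp: exp_ge_add_one_self)
    also have "\<dots> \<le> exp (2 * Kc * (\<Sum>k<n. \<epsilon> k * (1 + L k))) * exp (2 * Kc * \<epsilon> n * (1 + L n))"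
      using Suc by (intro mult_right_mono) auto
    also have "\<dots> = exp (2 * Kc * (\<Sum>k<Suc n. \<epsilon> k * (1 + L k)))"
      by (simp add: exp_add[symmetric] algebra_simps)
    finally show ?case .
  qed
  have summ': "summable (\<lambda>k. \<epsilon> k * (1 + L k))" using summ unfolding \<epsilon>_def .
  have QB: "Q n \<le> B" for n
  proof -
    have "(\<Sum>k<n. \<epsilon> k * (1 + L k)) \<le> (\<Sum>k. \<epsilon> k * (1 + L k))"
      by (rule sum_le_suminf[OF summ']) (use \<epsilon>0 L0 in auto)
    then have "exp (2 * Kc * (\<Sum>k<n. \<epsilon> k * (1 + L k))) \<le> B"
      unfolding B_def \<epsilon>_def[symmetric] using Kc0 by (simp add: mult_left_mono)
    then show ?thesis using Qexp[of n] by simp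
  qed
  show ?thesis
  proof (intro allI conjI)
    fix n
    show "cmod (gpoly a b n z) \<le> B" using gQ[of n] QB[of n] unfolding g_def by simp
    show "cmod (cpoly a b n z) \<le> L n * B" using cQ[of n] QB[of n] L0[of n] unfolding c_def
      by (meson mult_left_mono order_trans)
    show "cmod (gpoly a b (Suc n) z - gpoly a b n z) \<le> Kc * (\<bar>b (Suc n)\<bar> + \<bar>a (Suc n)^2 - 1\<bar>) * (cmod (gpoly a b n z) + cmod (cpoly a b n z))"
    proof -
      have "Kc/2 * \<epsilon> n * (cmod (g n) + cmod (c n)) \<le> Kc * \<epsilon> n * (cmod (g n) + cmod (c n))"
        using Kc0 \<epsilon>0[of n] by (intro mult_right_mono) auto
      then show ?thesis using estg[of n] unfolding g_def c_def \<epsilon>_def by linarith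
    qed
    show "cmod (cpoly a b (Suc n) z - z^2 * cpoly a b n z - gpoly a b n z) \<le> Kc * (\<bar>b (Suc n)\<bar> + \<bar>a (Suc n)^2 - 1\<bar>) * (cmod (gpoly a b n z) + cmod (cpoly a b n z))"
    proof -
      have "Kc/2 * \<epsilon> n * (cmod (g n) + cmod (c n)) \<le> Kc * \<epsilon> n * (cmod (g n) + cmod (c n))"
        using Kc0 \<epsilon>0[of n] by (intro mult_right_mono) auto
      then show ?thesis using esth[of n] unfolding g_def c_def \<epsilon>_def w_def by linarith
    qed
  qed
qed

definition uu :: "(nat \<Rightarrow> real) \<Rightarrow> (nat \<Rightarrow> real) \<Rightarrow> complex \<Rightarrow> complex" where
  "uu a b z = 1 + (\<Sum>i. gpoly a b (Suc i) z - gpoly a b i z)"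

lemma core:
  fixes a b :: "nat \<Rightarrow> real" and L :: "nat \<Rightarrow> real" and K :: "complex set"
  assumes a_pos: "\<And>n. n \<ge> 1 \<Longrightarrow> a n > 0"
  and M: "\<And>n. 1 / a (Suc n) \<le> M"
  and rho: "\<And>z. z \<in> K \<Longrightarrow> cmod z \<le> \<rho>" and r0: "\<rho> \<ge> 0"
  and L: "\<And>z n m. z \<in> K \<Longrightarrow> m \<le> n \<Longrightarrow> cmod (\<Sum>i\<le>m. (z^2)^i) \<le> L n"
  and L0: "\<And>n. L n \<ge> 0"
  and summ: "summable (\<lambda>n. (\<bar>b (Suc n)\<bar> + \<bar>a (Suc n)^2 - 1\<bar>) * (1 + L n))"
  shows "uniform_limit K (\<lambda>n z. gpoly a b n z) (uu a b) sequentially"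
proof -
  define Kc where "Kc = 2 * M * (1 + \<rho> + \<rho>^2)"
  define B where "B = exp (2 * Kc * (\<Sum>n. (\<bar>b (Suc n)\<bar> + \<bar>a (Suc n)^2 - 1\<bar>) * (1 + L n)))"
  define \<epsilon> where "\<epsilon> n = \<bar>b (Suc n)\<bar> + \<bar>a (Suc n)^2 - 1\<bar>" for n
  have apos: "a (Suc n) > 0" for n using a_pos by simp
  have M0: "M \<ge> 0" using M[of 0] apos[of 0] by (meson less_le_trans less_eq_real_def zero_less_divide_1_iff)
  have Kc0: "Kc \<ge> 0" unfolding Kc_def using M0 r0 by simp
  have \<epsilon>0: "\<epsilon> n \<ge> 0" for n unfolding \<epsilon>_def by simp
  have diff: "cmod (gpoly a b (Suc n) z - gpoly a b n z) \<le> Kc * B * (\<epsilon> n * (1 + L n))" if z: "z \<in> K" for n z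
  proof -
    note bd = bounds_at[OF a_pos M rho[OF z] L[OF z] L0 summ, folded Kc_def, folded B_def, rule_format, of n]
    have "cmod (gpoly a b (Suc n) z - gpoly a b n z) \<le> Kc * \<epsilon> n * (cmod (gpoly a b n z) + cmod (cpoly a b n z))"
      using bd unfolding \<epsilon>_def by blast
    also have "\<dots> \<le> Kc * \<epsilon> n * (B + L n * B)"
      using bd Kc0 \<epsilon>0[of n] by (intro mult_left_mono add_mono) auto
    finally show ?thesis by (simp add: algebra_simps)
  qed
  have W: "uniform_limit K (\<lambda>n z. \<Sum>i<n. gpoly a b (Suc i) z - gpoly a b i z)
      (\<lambda>z. \<Sum>i. gpoly a b (Suc i) z - gpoly a b i z) sequentially"
    by (rule Weierstrass_m_test[OF diff summable_mult[OF summ[folded \<epsilon>_def]]])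
  have W2: "uniform_limit K (\<lambda>n z. 1 + (\<Sum>i<n. gpoly a b (Suc i) z - gpoly a b i z)) (uu a b) sequentially"
    unfolding uu_def by (rule uniform_limit_add[OF uniform_limit_const W])
  show ?thesis
    by (rule uniform_limit_cong'[THEN iffD2, OF _ _ W2])
       (use sum_lessThan_telescope[of "\<lambda>i. gpoly a b i _"] in \<open>auto simp: gpoly_def[of a b 0]\<close>)
qed



lemma M_exists:
  fixes a :: "nat \<Rightarrow> real"
  assumes a_pos: "\<And>n. n \<ge> 1 \<Longrightarrow> a n > 0" and lim: "(\<lambda>n. \<bar>a (Suc n)^2 - 1\<bar>) \<longlonglongrightarrow> 0"
  shows "\<exists>M. \<forall>n. 1 / a (Suc n) \<le> M"
proof -
  have apos: "a (Suc n) > 0" for n using a_pos by simp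
  have "(\<lambda>n. a (Suc n)^2 - 1) \<longlonglongrightarrow> 0" using lim tendsto_rabs_zero_iff by blast
  then have "(\<lambda>n. a (Suc n)^2) \<longlonglongrightarrow> 1" by (rule LIM_zero_cancel)
  then have "(\<lambda>n. sqrt (a (Suc n)^2)) \<longlonglongrightarrow> sqrt 1" by (rule tendsto_real_sqrt)
  moreover have "sqrt (a (Suc n)^2) = a (Suc n)" for n using apos[of n] by simp
  ultimately have "(\<lambda>n. a (Suc n)) \<longlonglongrightarrow> 1" by simp
  then have "(\<lambda>n. 1 / a (Suc n)) \<longlonglongrightarrow> 1 / 1" by (intro tendsto_divide) auto
  then have "Bseq (\<lambda>n. 1 / a (Suc n))" by (intro convergent_imp_Bseq convergentI)
  then obtain K where K: "\<And>n. norm (1 / a (Suc n)) \<le> K" by (meson BseqE)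
  have "1 / a (Suc n) \<le> K" for n using K[of n] apos[of n] by simp
  then show ?thesis by blast
qed

lemma lin_rec:
  fixes c :: "nat \<Rightarrow> complex"
  assumes w: "cmod w < 1" and lim: "(\<lambda>n. c (Suc n) - w * c n) \<longlonglongrightarrow> h"
  shows "c \<longlonglongrightarrow> h / (1 - w)"
proof -
  have w1: "w \<noteq> 1" using w by auto
  define q where "q = h / (1 - w)"
  define e where "e n = c n - q" for n
  have nz: "1 - w \<noteq> 0" using w1 by simp
  have "(1 - w) * q = h" unfolding q_def using nz by simp
  then have hw: "q - w * q = h" by (simp add: algebra_simps)
  have "e (Suc n) - w * e n = (c (Suc n) - w * c n) - (q - w * q)" for n
    unfolding e_def by (simp add: algebra_simps)
  then have "e (Suc n) - w * e n = (c (Suc n) - w * c n) - h" for n unfolding hw .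
  then have y: "(\<lambda>n. e (Suc n) - w * e n) \<longlonglongrightarrow> 0"
    using lim by (simp add: LIM_zero)
  have "e \<longlonglongrightarrow> 0"
  proof (rule LIMSEQ_I)
    fix \<epsilon> :: real assume \<epsilon>: "\<epsilon> > 0"
    define r where "r = cmod w"
    have r: "r \<ge> 0" "r < 1" unfolding r_def using w by auto
    obtain N where N: "\<And>n. n \<ge> N \<Longrightarrow> norm (e (Suc n) - w * e n - 0) < \<epsilon>/3 * (1 - r)"
      using LIMSEQ_D[OF y, of "\<epsilon>/3 * (1 - r)"] \<epsilon> r by auto
    have step: "cmod (e (N + m)) \<le> r^m * cmod (e N) + \<epsilon>/3" for m
    proof (induction m)
      case 0 then show ?case using \<epsilon> by simp
    next
      case (Suc m)
      have "e (N + Suc m) = w * e (N + m) + (e (Suc (N + m)) - w * e (N + m))" by simp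
      then have "cmod (e (N + Suc m)) \<le> r * cmod (e (N + m)) + \<epsilon>/3 * (1 - r)"
        using N[of "N+m"] norm_triangle_ineq[of "w * e (N + m)" "e (Suc (N + m)) - w * e (N + m)"]
        unfolding r_def by (simp add: norm_mult)
      also have "\<dots> \<le> r * (r^m * cmod (e N) + \<epsilon>/3) + \<epsilon>/3 * (1 - r)"
        using Suc r by (intro add_right_mono mult_left_mono) auto
      also have "\<dots> = r^(Suc m) * cmod (e N) + \<epsilon>/3" by (simp add: field_simps)
      finally show ?case .
    qed
    have rm: "(\<lambda>m. r^m * cmod (e N)) \<longlonglongrightarrow> 0"
    proof -
      have "(\<lambda>m. r^m) \<longlonglongrightarrow> 0" using r by (intro LIMSEQ_power_zero) auto
      then show ?thesis by (rule tendsto_mult_left_zero)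
    qed
    then obtain m0 where m0: "\<And>m. m \<ge> m0 \<Longrightarrow> norm (r^m * cmod (e N) - 0) < \<epsilon>/3"
      using LIMSEQ_D[OF rm, of "\<epsilon>/3"] \<epsilon> by auto
    show "\<exists>no. \<forall>n\<ge>no. norm (e n - 0) < \<epsilon>"
    proof (intro exI allI impI)
      fix n assume n: "n \<ge> N + m0"
      have "cmod (e (N + (n - N))) \<le> r^(n-N) * cmod (e N) + \<epsilon>/3" by (rule step)
      moreover have "r^(n-N) * cmod (e N) < \<epsilon>/3" using m0[of "n - N"] n r by simp
      moreover have "N + (n - N) = n" using n by simp
      ultimately show "norm (e n - 0) < \<epsilon>" using \<epsilon> by simp
    qed
  qed
  then have "(\<lambda>n. e n + q) \<longlonglongrightarrow> 0 + q" by (intro tendsto_add) auto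
  then show ?thesis unfolding e_def q_def by simp
qed

lemma geom_bound_i:
  fixes z :: complex and d :: real
  assumes z: "cmod z \<le> 1" and d: "d > 0" "d \<le> cmod (1 - z^2)"
  shows "cmod (\<Sum>i\<le>m. (z^2)^i) \<le> 2 / d"
proof -
  have w1: "z^2 \<noteq> 1" using d by auto
  have "(\<Sum>i\<le>m. (z^2)^i) = (1 - (z^2)^Suc m) / (1 - z^2)" using w1 by (simp add: sum_gp0)
  then have "cmod (\<Sum>i\<le>m. (z^2)^i) = cmod (1 - (z^2)^Suc m) / cmod (1 - z^2)" by (simp add: norm_divide)
  also have "\<dots> \<le> 2 / d"
  proof (rule frac_le)
    have "cmod ((z^2)^Suc m) = cmod z ^ (2 * Suc m)" by (simp only: norm_power power_mult)
    moreover have "cmod z ^ (2 * Suc m) \<le> 1" by (rule power_le_one) (use z in auto)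
    ultimately have "cmod ((z^2)^Suc m) \<le> 1" by simp
    then show "cmod (1 - (z^2)^Suc m) \<le> 2"
      using norm_triangle_ineq4[of 1 "(z^2)^Suc m"] by simp
  qed (use d in auto)
  finally show ?thesis .
qed

lemma part1:
  fixes a b :: "nat \<Rightarrow> real"
  assumes a_pos: "\<And>n. n \<ge> 1 \<Longrightarrow> a n > 0"
  and S: "summable (\<lambda>n. \<bar>b (n+1)\<bar> + \<bar>(a (n+1))^2 - 1\<bar>)"
  shows "(\<forall>z \<in> cball 0 1 - {1, -1}. (\<lambda>n. gpoly a b n z) \<longlonglongrightarrow> uu a b z) \<and>
         (\<forall>K. compact K \<and> K \<subseteq> cball 0 1 - {1, -1} \<longrightarrow>
              uniform_limit K (\<lambda>n z. gpoly a b n z) (uu a b) sequentially) \<and>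
         uu a b holomorphic_on ball 0 1 \<and>
         continuous_on (cball 0 1 - {1, -1}) (uu a b) \<and>
         (\<forall>z \<in> ball 0 1. (\<lambda>n. cpoly a b n z) \<longlonglongrightarrow> uu a b z / (1 - z^2))"
proof -
  define \<epsilon> where "\<epsilon> n = \<bar>b (Suc n)\<bar> + \<bar>a (Suc n)^2 - 1\<bar>" for n
  have S': "summable \<epsilon>" using S unfolding \<epsilon>_def by simp
  have \<epsilon>0: "\<epsilon> n \<ge> 0" for n unfolding \<epsilon>_def by simp
  have elim: "\<epsilon> \<longlonglongrightarrow> 0" using summable_LIMSEQ_zero[OF S'] .
  have "(\<lambda>n. \<bar>a (Suc n)^2 - 1\<bar>) \<longlonglongrightarrow> 0"
    by (rule Lim_null_comparison[OF always_eventually elim]) (simp add: \<epsilon>_def)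
  then obtain M where M: "\<And>n. 1 / a (Suc n) \<le> M" using M_exists[where a=a, OF a_pos] by blast
  define S where "S = cball (0::complex) 1 - {1, -1}"
  have UL: "uniform_limit K (\<lambda>n z. gpoly a b n z) (uu a b) sequentially"
    if K: "compact K" "K \<subseteq> S" for K
  proof -
    obtain d where d: "d > 0" "\<And>z. z \<in> K \<Longrightarrow> d \<le> cmod (1 - z^2)"
    proof (cases "K = {}")
      case True then show ?thesis using that[of 1] by auto
    next
      case False
      have "continuous_on K (\<lambda>z. cmod (1 - z^2))" by (intro continuous_intros)
      then obtain z0 where z0: "z0 \<in> K" "\<And>y. y \<in> K \<Longrightarrow> cmod (1 - z0^2) \<le> cmod (1 - y^2)"
        using continuous_attains_inf[OF K(1) False] by blast
      have "z0 \<noteq> 1" "z0 \<noteq> -1" using z0(1) K(2) unfolding S_def by auto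
      then have "z0^2 \<noteq> 1" by (simp add: power2_eq_1_iff)
      then have "cmod (1 - z0^2) > 0" by simp
      then show ?thesis using that z0(2) by blast
    qed
    have zK: "cmod z \<le> 1" if "z \<in> K" for z using that K(2) unfolding S_def by auto
    show ?thesis
    proof (rule core[OF a_pos M _ _ _ _ summable_mult2[OF S'[unfolded \<epsilon>_def], of "1 + 2 / d"]])
      show "\<And>z. z \<in> K \<Longrightarrow> cmod z \<le> 1" by (rule zK)
      show "\<And>z n m. z \<in> K \<Longrightarrow> m \<le> n \<Longrightarrow> cmod (\<Sum>i\<le>m. (z^2)^i) \<le> 2 / d"
        using geom_bound_i zK d by blast
      show "\<And>n. 0 \<le> 2 / d" using d by simp
      show "(0::real) \<le> 1" by simp
    qed
  qed
  have pt: "(\<lambda>n. gpoly a b n z) \<longlonglongrightarrow> uu a b z" if "z \<in> S" for z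
    using tendsto_uniform_limitI[OF UL[of "{z}"]] that by auto
  have holo: "uu a b holomorphic_on ball 0 1"
    unfolding holomorphic_on_def
  proof
    fix z :: complex assume z: "z \<in> ball 0 1"
    define r where "r = (1 - cmod z) / 2"
    have r: "r > 0" using z unfolding r_def by simp
    have sub: "cball z r \<subseteq> S"
    proof
      fix y assume "y \<in> cball z r"
      then have "cmod y < 1" using z norm_triangle_ineq2[of y z] unfolding r_def
        by (simp add: dist_norm norm_minus_commute)
      then show "y \<in> S" unfolding S_def by auto
    qed
    have ul: "uniform_limit (cball z r) (\<lambda>n z. gpoly a b n z) (uu a b) sequentially"
      by (rule UL[OF compact_cball sub])
    obtain "uu a b holomorphic_on ball z r"
      by (rule holomorphic_uniform_limit[OF _ ul trivial_limit_sequentially])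
         (auto intro!: always_eventually gpoly_cont holomorphic_on_subset[OF gpoly_holo])
    then have "uu a b field_differentiable (at z)"
      using holomorphic_on_imp_differentiable_at[OF _ open_ball] r by auto
    then show "uu a b field_differentiable (at z within ball 0 1)"
      by (rule field_differentiable_at_within)
  qed
  have cont: "continuous_on S (uu a b)"
    unfolding continuous_on_eq_continuous_within
  proof
    fix x assume x: "x \<in> S"
    define \<delta> where "\<delta> = min (cmod (x - 1)) (cmod (x + 1)) / 2"
    have x1: "x \<noteq> 1" "x \<noteq> -1" using x unfolding S_def by auto
    have \<delta>: "\<delta> > 0" using x1 unfolding \<delta>_def by (auto simp: add_eq_0_iff minus_equation_iff)
    define K where "K = cball 0 1 \<inter> cball x \<delta>"
    have cb: "y \<noteq> 1 \<and> y \<noteq> -1" if "y \<in> cball x \<delta>" for y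
    proof -
      have p: "cmod (x - 1) > 0" "cmod (x + 1) > 0" using x1 by (auto simp: add_eq_0_iff minus_equation_iff)
      have dxy: "cmod (x - y) \<le> \<delta>" using that by (simp add: dist_norm)
      have lt: "\<delta> < cmod (x - 1)" "\<delta> < cmod (x + 1)" 
        using p min.cobounded1[of "cmod (x - 1)" "cmod (x + 1)"] min.cobounded2[of "cmod (x - 1)" "cmod (x + 1)"]
        unfolding \<delta>_def by linarith+
      show ?thesis
      proof (intro conjI notI)
        assume "y = 1" then show False using dxy lt by simp
      next
        assume "y = -1" then show False using dxy lt by simp
      qed
    qed
    have KS: "K \<subseteq> S"
    proof
      fix y assume "y \<in> K"
      then have y: "y \<in> cball 0 1" "y \<in> cball x \<delta>" by (auto simp: K_def)
      show "y \<in> S" using cb[OF y(2)] y(1) by (simp add: S_def)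
    qed
    have Kc: "compact K" unfolding K_def by (intro compact_Int_closed compact_cball closed_cball)
    have "continuous_on K (uu a b)"
      by (rule uniform_limit_theorem[OF _ UL[OF Kc KS] trivial_limit_sequentially])
         (auto intro!: always_eventually gpoly_cont)
    moreover have xK: "x \<in> K" unfolding K_def using x \<delta> unfolding S_def by auto
    ultimately have "continuous (at x within K) (uu a b)"
      using continuous_on_eq_continuous_within by blast
    moreover have "at x within S = at x within K"
    proof (rule at_within_nhd[of x "ball x \<delta>"])
      show "x \<in> ball x \<delta>" using \<delta> by simp
      show "S \<inter> ball x \<delta> - {x} = K \<inter> ball x \<delta> - {x}"
      proof -
        have "1 \<notin> ball x \<delta>" "-1 \<notin> ball x \<delta>" using cb[of 1] cb[of "-1"] by auto
        then show ?thesis unfolding S_def K_def by auto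
      qed
    qed simp
    ultimately show "continuous (at x within S) (uu a b)" by simp
  qed
  have clim: "(\<lambda>n. cpoly a b n z) \<longlonglongrightarrow> uu a b z / (1 - z^2)" if z: "z \<in> ball 0 1" for z
  proof -
    define d where "d = cmod (1 - z^2)"
    have z1: "cmod z < 1" using z by simp
    have "cmod (z^2) < 1" using z1 by (simp add: norm_power power_less_one_iff)
    then have "z^2 \<noteq> 1" by auto
    then have d: "d > 0" unfolding d_def by simp
    have zz: "cmod z \<le> 1" using z1 by simp
    have Lz: "\<And>n m. m \<le> n \<Longrightarrow> cmod (\<Sum>i\<le>m. (z^2)^i) \<le> 2/d"
      using geom_bound_i[OF zz d] d_def by simp
    have L0: "\<And>n::nat. 0 \<le> 2/d" using d by simp
    define Kc where "Kc = 2 * M * (1 + 1 + (1::real)^2)"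
    have "0 < 1 / a (Suc 0)" using a_pos[of "Suc 0"] by simp
    then have M0: "M \<ge> 0" using M[of 0] by linarith
    have Kc0: "Kc \<ge> 0" unfolding Kc_def using M0 by simp
    define B where "B = exp (2 * (2 * M * (1 + 1 + 1^2)) * (\<Sum>n. (\<bar>b (Suc n)\<bar> + \<bar>a (Suc n)^2 - 1\<bar>) * (1 + 2/d)))"
    have bd0: "\<forall>n. cmod (gpoly a b n z) \<le> B \<and> cmod (cpoly a b n z) \<le> 2/d * B
     \<and> cmod (gpoly a b (Suc n) z - gpoly a b n z) \<le> 2 * M * (1 + 1 + 1^2) * (\<bar>b (Suc n)\<bar> + \<bar>a (Suc n)^2 - 1\<bar>) * (cmod (gpoly a b n z) + cmod (cpoly a b n z))
     \<and> cmod (cpoly a b (Suc n) z - z^2 * cpoly a b n z - gpoly a b n z) \<le> 2 * M * (1 + 1 + 1^2) * (\<bar>b (Suc n)\<bar> + \<bar>a (Suc n)^2 - 1\<bar>) * (cmod (gpoly a b n z) + cmod (cpoly a b n z))"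
      unfolding B_def
      by (rule bounds_at[where a=a and b=b and L="\<lambda>_. 2/d" and z=z and \<rho>=1 and M=M, OF a_pos M zz Lz L0
        summable_mult2[OF S'[unfolded \<epsilon>_def], of "1 + 2 / d"]])
    have bd: "cmod (gpoly a b n z) \<le> B \<and> cmod (cpoly a b n z) \<le> 2/d * B
      \<and> cmod (cpoly a b (Suc n) z - z^2 * cpoly a b n z - gpoly a b n z) \<le> Kc * \<epsilon> n * (cmod (gpoly a b n z) + cmod (cpoly a b n z))" for n
      using bd0 unfolding Kc_def \<epsilon>_def by blast
    have "(\<lambda>n. cpoly a b (Suc n) z - z^2 * cpoly a b n z - gpoly a b n z) \<longlonglongrightarrow> 0"
    proof (rule Lim_null_comparison[OF always_eventually])
      show "(\<lambda>n. Kc * \<epsilon> n * (B + 2/d * B)) \<longlonglongrightarrow> 0"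
        using elim by (intro tendsto_mult_right_zero tendsto_mult_left_zero)
      show "\<forall>n. cmod (cpoly a b (Suc n) z - z^2 * cpoly a b n z - gpoly a b n z) \<le> Kc * \<epsilon> n * (B + 2/d * B)"
      proof
        fix n
        have "Kc * \<epsilon> n * (cmod (gpoly a b n z) + cmod (cpoly a b n z)) \<le> Kc * \<epsilon> n * (B + 2/d * B)"
          using bd[of n] Kc0 \<epsilon>0[of n] by (intro mult_left_mono add_mono) auto
        then show "cmod (cpoly a b (Suc n) z - z^2 * cpoly a b n z - gpoly a b n z) \<le> Kc * \<epsilon> n * (B + 2/d * B)"
          using bd[of n] by linarith
      qed
    qed
    moreover have "z \<in> S" using z1 unfolding S_def by auto
    then have "(\<lambda>n. gpoly a b n z) \<longlonglongrightarrow> uu a b z" by (rule pt)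
    ultimately have "(\<lambda>n. (cpoly a b (Suc n) z - z^2 * cpoly a b n z - gpoly a b n z) + gpoly a b n z) \<longlonglongrightarrow> 0 + uu a b z"
      by (intro tendsto_add)
    then have "(\<lambda>n. cpoly a b (Suc n) z - z^2 * cpoly a b n z) \<longlonglongrightarrow> uu a b z" by simp
    then show ?thesis by (rule lin_rec[OF \<open>cmod (z^2) < 1\<close>])
  qed
  show ?thesis unfolding S_def[symmetric]
  proof (intro conjI ballI allI impI)
    show "\<And>z. z \<in> S \<Longrightarrow> (\<lambda>n. gpoly a b n z) \<longlonglongrightarrow> uu a b z" by (rule pt)
    show "\<And>K. compact K \<and> K \<subseteq> S \<Longrightarrow> uniform_limit K (\<lambda>n z. gpoly a b n z) (uu a b) sequentially"
      using UL by blast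
  qed (fact holo, fact cont, rule clim)
qed

lemma part2:
  fixes a b :: "nat \<Rightarrow> real"
  assumes a_pos: "\<And>n. n \<ge> 1 \<Longrightarrow> a n > 0"
  and S2: "summable (\<lambda>n. real (n+1) * (\<bar>b (n+1)\<bar> + \<bar>(a (n+1))^2 - 1\<bar>))"
  shows "(\<forall>z \<in> cball 0 1. (\<lambda>n. gpoly a b n z) \<longlonglongrightarrow> uu a b z) \<and>
         uniform_limit (cball 0 1) (\<lambda>n z. gpoly a b n z) (uu a b) sequentially \<and>
         continuous_on (cball 0 1) (uu a b)"
proof -
  define \<epsilon> where "\<epsilon> n = \<bar>b (Suc n)\<bar> + \<bar>a (Suc n)^2 - 1\<bar>" for n
  have S2': "summable (\<lambda>n. real (Suc n) * \<epsilon> n)" using S2 unfolding \<epsilon>_def by simp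
  have \<epsilon>0: "\<epsilon> n \<ge> 0" for n unfolding \<epsilon>_def by simp
  have S': "summable \<epsilon>"
  proof (rule summable_comparison_test'[OF S2'])
    fix n :: nat
    have "\<epsilon> n \<le> real (Suc n) * \<epsilon> n" using \<epsilon>0[of n] by (simp add: algebra_simps)
    then show "norm (\<epsilon> n) \<le> real (Suc n) * \<epsilon> n" using \<epsilon>0[of n] by simp
  qed
  have elim: "\<epsilon> \<longlonglongrightarrow> 0" using summable_LIMSEQ_zero[OF S'] .
  have "(\<lambda>n. \<bar>a (Suc n)^2 - 1\<bar>) \<longlonglongrightarrow> 0"
    by (rule Lim_null_comparison[OF always_eventually elim]) (simp add: \<epsilon>_def)
  then obtain M where M: "\<And>n. 1 / a (Suc n) \<le> M" using M_exists[where a=a, OF a_pos] by blast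
  have Lb: "cmod (\<Sum>i\<le>m. (z^2)^i) \<le> real (Suc n)" if z: "z \<in> cball 0 1" and mn: "m \<le> n" for z :: complex and m n
  proof -
    have "cmod (\<Sum>i\<le>m. (z^2)^i) \<le> (\<Sum>i\<le>m. cmod ((z^2)^i))" by (rule norm_sum)
    also have "\<dots> \<le> (\<Sum>i\<le>m. 1)"
    proof (rule sum_mono)
      fix i
      have "cmod ((z^2)^i) = cmod z ^ (2 * i)" by (simp only: norm_power power_mult)
      also have "\<dots> \<le> 1" by (rule power_le_one) (use z in auto)
      finally show "cmod ((z^2)^i) \<le> 1" .
    qed
    also have "\<dots> \<le> real (Suc n)" using mn by simp
    finally show ?thesis .
  qed
  have summ: "summable (\<lambda>n. (\<bar>b (Suc n)\<bar> + \<bar>a (Suc n)^2 - 1\<bar>) * (1 + real (Suc n)))"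
  proof -
    have "summable (\<lambda>n. \<epsilon> n + real (Suc n) * \<epsilon> n)" by (rule summable_add[OF S' S2'])
    then show ?thesis unfolding \<epsilon>_def by (simp add: algebra_simps)
  qed
  have UL: "uniform_limit (cball 0 1) (\<lambda>n z. gpoly a b n z) (uu a b) sequentially"
  proof (rule core[OF a_pos M _ _ _ _ summ])
    show "\<And>z. z \<in> cball 0 1 \<Longrightarrow> cmod z \<le> 1" by simp
    show "\<And>z n m. z \<in> cball 0 1 \<Longrightarrow> m \<le> n \<Longrightarrow> cmod (\<Sum>i\<le>m. (z^2)^i) \<le> real (Suc n)"
      by (rule Lb)
    show "\<And>n. 0 \<le> real (Suc n)" by simp
    show "(0::real) \<le> 1" by simp
  qed
  have pt: "\<forall>z \<in> cball 0 1. (\<lambda>n. gpoly a b n z) \<longlonglongrightarrow> uu a b z"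
    using tendsto_uniform_limitI[OF UL] by blast
  have "continuous_on (cball 0 1) (uu a b)"
    by (rule uniform_limit_theorem[OF _ UL trivial_limit_sequentially])
       (auto intro!: always_eventually gpoly_cont)
  then show ?thesis using pt UL by blast
qed

lemma summable_n_geom:
  fixes x :: real assumes "\<bar>x\<bar> < 1"
  shows "summable (\<lambda>n. real (Suc n) * x^n)"
proof -
  have "summable (\<lambda>n. diffs (\<lambda>_. 1::real) n * x^n)"
    by (rule termdiff_converges[of x 1]) (use assms in \<open>auto intro: summable_geometric\<close>)
  then show ?thesis by (simp add: diffs_def)
qed

lemma powr_conv:
  fixes R :: real assumes "R > 0"
  shows "R powr (- 2 * real m) = (1 / R^2)^m"
proof -
  have "R powr (- 2 * real m) = inverse (R powr real (2 * m))"
    by (simp add: powr_minus[symmetric])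
  also have "\<dots> = inverse (R^(2*m))" using powr_realpow[OF assms, of "2*m"] by simp
  also have "\<dots> = (1 / R^2)^m" by (simp add: power_mult power_one_over inverse_eq_divide)
  finally show ?thesis .
qed

lemma part3:
  fixes a b :: "nat \<Rightarrow> real" and C R :: real
  assumes a_pos: "\<And>n. n \<ge> 1 \<Longrightarrow> a n > 0"
  and R: "R > 1" and bnd: "\<forall>n\<ge>1. \<bar>b n\<bar> + \<bar>(a n)^2 - 1\<bar> \<le> C * R powr (- 2 * real n)"
  shows "(\<forall>z \<in> ball 0 R. (\<lambda>n. gpoly a b n z) \<longlonglongrightarrow> uu a b z) \<and>
         (\<forall>K. compact K \<and> K \<subseteq> ball 0 R \<longrightarrow>
              uniform_limit K (\<lambda>n z. gpoly a b n z) (uu a b) sequentially)"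
proof -
  define \<epsilon> where "\<epsilon> n = \<bar>b (Suc n)\<bar> + \<bar>a (Suc n)^2 - 1\<bar>" for n
  define q where "q = 1 / R^2"
  have q: "q > 0" "q < 1" unfolding q_def using R by (auto simp: power_one_over[symmetric] power_less_one_iff)
  have \<epsilon>0: "\<epsilon> n \<ge> 0" for n unfolding \<epsilon>_def by simp
  have \<epsilon>b: "\<epsilon> n \<le> C * q^(Suc n)" for n
    using bnd[rule_format, of "Suc n"] powr_conv[of R "Suc n"] R unfolding \<epsilon>_def q_def by simp
  have C0: "C \<ge> 0"
  proof (rule ccontr)
    assume "\<not> C \<ge> 0"
    then have "C * q^(Suc 0) < 0" using q by (simp add: mult_neg_pos)
    then show False using \<epsilon>b[of 0] \<epsilon>0[of 0] by linarith
  qed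
  have elim: "\<epsilon> \<longlonglongrightarrow> 0"
  proof (rule Lim_null_comparison[OF always_eventually])
    show "\<forall>n. norm (\<epsilon> n) \<le> C * q^(Suc n)" using \<epsilon>b \<epsilon>0 by simp
    have "(\<lambda>n. q^(Suc n)) \<longlonglongrightarrow> 0" using q by (intro LIMSEQ_Suc LIMSEQ_power_zero) auto
    then show "(\<lambda>n. C * q^(Suc n)) \<longlonglongrightarrow> 0" by (rule tendsto_mult_right_zero)
  qed
  have "(\<lambda>n. \<bar>a (Suc n)^2 - 1\<bar>) \<longlonglongrightarrow> 0"
    by (rule Lim_null_comparison[OF always_eventually elim]) (simp add: \<epsilon>_def)
  then obtain M where M: "\<And>n. 1 / a (Suc n) \<le> M" using M_exists[where a=a, OF a_pos] by blast
  have UL: "uniform_limit K (\<lambda>n z. gpoly a b n z) (uu a b) sequentially"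
    if K: "compact K" "K \<subseteq> ball 0 R" for K
  proof -
    obtain \<rho> where \<rho>: "1 \<le> \<rho>" "\<rho> < R" "\<And>z. z \<in> K \<Longrightarrow> cmod z \<le> \<rho>"
    proof (cases "K = {}")
      case True then show ?thesis using that[of 1] R by auto
    next
      case False
      have "continuous_on K (\<lambda>z. cmod z)" by (intro continuous_intros)
      then obtain z0 where z0: "z0 \<in> K" "\<And>y. y \<in> K \<Longrightarrow> cmod y \<le> cmod z0"
        using continuous_attains_sup[OF K(1) False] by blast
      have "cmod z0 < R" using z0(1) K(2) by auto
      then show ?thesis using that[of "max 1 (cmod z0)"] z0(2) R by fastforce
    qed
    define L where "L n = real (Suc n) * \<rho>^(2*n)" for n
    have Lb: "cmod (\<Sum>i\<le>m. (z^2)^i) \<le> L n" if z: "z \<in> K" and mn: "m \<le> n" for z :: complex and m n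
    proof -
      have "cmod (\<Sum>i\<le>m. (z^2)^i) \<le> (\<Sum>i\<le>m. cmod ((z^2)^i))" by (rule norm_sum)
      also have "\<dots> \<le> (\<Sum>i\<le>m. \<rho>^(2*n))"
      proof (rule sum_mono)
        fix i assume "i \<in> {..m}"
        then have i: "2 * i \<le> 2 * n" using mn by simp
        have "cmod ((z^2)^i) = cmod z ^ (2 * i)" by (simp only: norm_power power_mult)
        also have "\<dots> \<le> \<rho> ^ (2 * i)" using \<rho>(3)[OF z] by (intro power_mono) auto
        also have "\<dots> \<le> \<rho> ^ (2 * n)" by (rule power_increasing[OF i \<rho>(1)])
        finally show "cmod ((z^2)^i) \<le> \<rho>^(2*n)" .
      qed
      also have "\<dots> = real (Suc m) * \<rho>^(2*n)" by simp
      also have "\<dots> \<le> L n" unfolding L_def using mn \<rho>(1) by (intro mult_right_mono) auto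
      finally show ?thesis .
    qed
    have L0: "L n \<ge> 0" for n unfolding L_def using \<rho>(1) by simp
    define x where "x = \<rho>^2 * q"
    have x: "x \<ge> 0" "x < 1"
    proof -
      show "x \<ge> 0" unfolding x_def using q by simp
      have "\<rho>^2 < R^2" using \<rho> by (intro power_strict_mono) auto
      then show "x < 1" unfolding x_def q_def using R by simp
    qed
    have summ: "summable (\<lambda>n. (\<bar>b (Suc n)\<bar> + \<bar>a (Suc n)^2 - 1\<bar>) * (1 + L n))"
    proof (rule summable_comparison_test'[OF summable_mult[OF summable_n_geom, of x "2 * C"]])
      show "\<bar>x\<bar> < 1" using x by simp
      fix n :: nat
      have "1 \<le> \<rho>^(2*n)" using \<rho>(1) by (simp add: one_le_power)
      moreover have "1 \<le> real (Suc n)" by simp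
      ultimately have one: "1 \<le> L n" unfolding L_def using one_le_mult_iff by (metis mult_mono' order.trans zero_le_one mult_1)
      have "norm (\<epsilon> n * (1 + L n)) = \<epsilon> n * (1 + L n)" using \<epsilon>0[of n] L0[of n] by simp
      also have "\<dots> \<le> C * q^(Suc n) * (2 * L n)"
        using \<epsilon>b[of n] \<epsilon>0[of n] one by (intro mult_mono) auto
      also have "\<dots> \<le> C * q^n * (2 * L n)"
        using q C0 L0[of n] by (intro mult_right_mono mult_left_mono) (auto simp: power_Suc2 mult_le_cancel_left1 intro: power_le_one)
      also have "\<dots> = 2 * C * (real (Suc n) * x^n)"
        unfolding L_def x_def power_mult power_mult_distrib by (simp add: algebra_simps)
      finally show "norm ((\<bar>b (Suc n)\<bar> + \<bar>a (Suc n)^2 - 1\<bar>) * (1 + L n)) \<le> 2 * C * (real (Suc n) * x^n)"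
        unfolding \<epsilon>_def .
    qed
    show ?thesis
      by (rule core[OF a_pos M \<rho>(3) _ Lb L0 summ]) (use \<rho>(1) in auto)
  qed
  have pt: "(\<lambda>n. gpoly a b n z) \<longlonglongrightarrow> uu a b z" if "z \<in> ball 0 R" for z
    using tendsto_uniform_limitI[OF UL[of "{z}"]] that by auto
  show ?thesis using pt UL by blast
qed


theorem theoremA3:
  fixes a b :: "nat \<Rightarrow> real"
  assumes a_pos: "\<And>n. n \<ge> 1 \<Longrightarrow> a n > 0"
  shows
   "(summable (\<lambda>n. \<bar>b (n+1)\<bar> + \<bar>(a (n+1))^2 - 1\<bar>) \<longrightarrow>
      (\<exists>u :: complex \<Rightarrow> complex.
         (\<forall>z \<in> cball 0 1 - {1, -1}. (\<lambda>n. gpoly a b n z) \<longlonglongrightarrow> u z) \<and>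
         (\<forall>K. compact K \<and> K \<subseteq> cball 0 1 - {1, -1} \<longrightarrow>
              uniform_limit K (\<lambda>n z. gpoly a b n z) u sequentially) \<and>
         u holomorphic_on ball 0 1 \<and>
         continuous_on (cball 0 1 - {1, -1}) u \<and>
         (\<forall>z \<in> ball 0 1. (\<lambda>n. cpoly a b n z) \<longlonglongrightarrow> u z / (1 - z^2))))
  \<and>
   (summable (\<lambda>n. real (n+1) * (\<bar>b (n+1)\<bar> + \<bar>(a (n+1))^2 - 1\<bar>)) \<longrightarrow>
      (\<exists>u :: complex \<Rightarrow> complex.
         (\<forall>z \<in> cball 0 1. (\<lambda>n. gpoly a b n z) \<longlonglongrightarrow> u z) \<and>
         uniform_limit (cball 0 1) (\<lambda>n z. gpoly a b n z) u sequentially \<and>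
         continuous_on (cball 0 1) u))
  \<and>
   (\<forall>C R::real. R > 1 \<and> (\<forall>n\<ge>1. \<bar>b n\<bar> + \<bar>(a n)^2 - 1\<bar> \<le> C * R powr (- 2 * real n)) \<longrightarrow>
      (\<exists>u :: complex \<Rightarrow> complex.
         (\<forall>z \<in> ball 0 R. (\<lambda>n. gpoly a b n z) \<longlonglongrightarrow> u z) \<and>
         (\<forall>K. compact K \<and> K \<subseteq> ball 0 R \<longrightarrow>
              uniform_limit K (\<lambda>n z. gpoly a b n z) u sequentially)))"
  proof (intro conjI impI allI)
  assume "summable (\<lambda>n. \<bar>b (n+1)\<bar> + \<bar>(a (n+1))^2 - 1\<bar>)"
  from part1[where a=a and b=b, OF a_pos this] show "\<exists>u :: complex \<Rightarrow> complex.
         (\<forall>z \<in> cball 0 1 - {1, -1}. (\<lambda>n. gpoly a b n z) \<longlonglongrightarrow> u z) \<and>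
         (\<forall>K. compact K \<and> K \<subseteq> cball 0 1 - {1, -1} \<longrightarrow>
              uniform_limit K (\<lambda>n z. gpoly a b n z) u sequentially) \<and>
         u holomorphic_on ball 0 1 \<and>
         continuous_on (cball 0 1 - {1, -1}) u \<and>
         (\<forall>z \<in> ball 0 1. (\<lambda>n. cpoly a b n z) \<longlonglongrightarrow> u z / (1 - z^2))" by blast
next
  assume "summable (\<lambda>n. real (n+1) * (\<bar>b (n+1)\<bar> + \<bar>(a (n+1))^2 - 1\<bar>))"
  from part2[where a=a and b=b, OF a_pos this] show "\<exists>u :: complex \<Rightarrow> complex.
         (\<forall>z \<in> cball 0 1. (\<lambda>n. gpoly a b n z) \<longlonglongrightarrow> u z) \<and>
         uniform_limit (cball 0 1) (\<lambda>n z. gpoly a b n z) u sequentially \<and>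
         continuous_on (cball 0 1) u" by blast
next
  fix C R :: real
  assume h: "R > 1 \<and> (\<forall>n\<ge>1. \<bar>b n\<bar> + \<bar>(a n)^2 - 1\<bar> \<le> C * R powr (- 2 * real n))"
  from part3[where a=a and b=b and C=C and R=R, OF a_pos] h show "\<exists>u :: complex \<Rightarrow> complex.
         (\<forall>z \<in> ball 0 R. (\<lambda>n. gpoly a b n z) \<longlonglongrightarrow> u z) \<and>
         (\<forall>K. compact K \<and> K \<subseteq> ball 0 R \<longrightarrow>
              uniform_limit K (\<lambda>n z. gpoly a b n z) u sequentially)" by blast
qed

end
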